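(* Let $X$ be a real Hilbert space and $Y$ a real reflexive Banach space. Let $F\colon X \to Y$ be a continuous function and let $L > 0$. Then the following are equivalent: (i) $F$ is Fréchet differentiable on $X$ and its derivative $F'\colon X \to \mathcal{B}(X,Y)$ is $L$-Lipschitz continuous, i.e. $\|F'(x) - F'(y)\| \le L\|x-y\|$ for all $x,y \in X$, where the norm on the left is the operator norm; (ii) for every $n \ge 1$, all $x_1,\ldots,x_n \in X$ and all $\lambda_1,\ldots,\lambda_n \ge 0$ with $\sum_{i=1}^n \lambda_i = 1$, $$\Big\| F\Big(\sum_{i=1}^n \lambda_i x_i\Big) - \sum_{i=1}^n \lambda_i F(x_i)\Big\| \le \frac{L}{2}\sum_{1\le i<j\le n} \lambda_i\lambda_j \|x_i - x_j\|^2.$$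
   Context: $\mathcal{B}(X,Y)$ denotes the space of bounded linear operators from $X$ to $Y$, equipped with the operator norm $\|T\| = \sup_{\|x\|\le 1}\|T(x)\|$. The same symbol $\|\cdot\|$ denotes the norms on all the spaces involved. *)

theory Defs
  imports "HOL-Analysis.Analysis"
begin

definition reflexive_space :: "'a::real_normed_vector itself \<Rightarrow> bool" where
  "reflexive_space _ \<longleftrightarrow>
     (\<forall>\<phi> :: ('a \<Rightarrow>\<^sub>L real) \<Rightarrow>\<^sub>L real. \<exists>y::'a. \<forall>f. blinfun_apply \<phi> f = blinfun_apply f y)"

end

theory Submission
  imports Defs
begin


lemma taylor_bound:
  fixes F :: "'a::real_normed_vector \<Rightarrow> 'b::real_normed_vector" and F' :: "'a \<Rightarrow> ('a \<Rightarrow>\<^sub>L 'b)"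
  assumes der: "\<forall>x. (F has_derivative blinfun_apply (F' x)) (at x)"
    and lip: "\<forall>x y. norm (F' x - F' y) \<le> L * norm (x - y)"
  shows "norm (F p - F q - F' q (p - q)) \<le> L/2 * (norm (p - q))^2"
proof -
  define h where "h = p - q"
  define g where "g t = F (q + t *\<^sub>R h) - t *\<^sub>R F' q h" for t
  have gd: "(g has_vector_derivative (F' (q + t *\<^sub>R h) h - F' q h)) (at t)" for t
  proof -
    have 1: "((\<lambda>t. q + t *\<^sub>R h) has_derivative (\<lambda>s. s *\<^sub>R h)) (at t)"
      by (auto intro!: derivative_eq_intros)
    have 2: "((\<lambda>t. F (q + t *\<^sub>R h)) has_derivative (\<lambda>s. F' (q + t *\<^sub>R h) (s *\<^sub>R h))) (at t)"
      using has_derivative_compose[OF 1 der[rule_format, of "q + t *\<^sub>R h"]] by (simp add: o_def)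
    have 3: "((\<lambda>t. t *\<^sub>R F' q h) has_derivative (\<lambda>s. s *\<^sub>R F' q h)) (at t)"
      by (auto intro!: derivative_eq_intros)
    have "(g has_derivative (\<lambda>s. F' (q + t *\<^sub>R h) (s *\<^sub>R h) - s *\<^sub>R F' q h)) (at t)"
      unfolding g_def using has_derivative_diff[OF 2 3] by simp
    then show ?thesis unfolding has_vector_derivative_def
      by (simp add: blinfun.scaleR_right scaleR_diff_right)
  qed
  have gc: "continuous_on {0..1} g"
    using gd by (meson continuous_at_imp_continuous_on has_vector_derivative_continuous)
  define \<phi> where "\<phi> t = L/2 * t^2 * (norm h)^2" for t :: real
  have pd: "(\<phi> has_vector_derivative (L * t * (norm h)^2)) (at t)" for t
    unfolding \<phi>_def has_real_derivative_iff_has_vector_derivative[symmetric]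
    by (auto intro!: derivative_eq_intros)
  have pc: "continuous_on {0..1} \<phi>" unfolding \<phi>_def by (intro continuous_intros)
  have bnd: "norm (F' (q + t *\<^sub>R h) h - F' q h) \<le> L * t * (norm h)^2" if "0 < t" for t
  proof -
    have "norm (F' (q + t *\<^sub>R h) h - F' q h) = norm ((F' (q + t *\<^sub>R h) - F' q) h)"
      by (simp add: blinfun.diff_left)
    also have "\<dots> \<le> norm (F' (q + t *\<^sub>R h) - F' q) * norm h" by (rule norm_blinfun)
    also have "\<dots> \<le> L * norm (t *\<^sub>R h) * norm h"
      using lip[rule_format, of "q + t *\<^sub>R h" q] by (intro mult_right_mono) auto
    also have "\<dots> = L * t * (norm h)^2" using that by (simp add: power2_eq_square)
    finally show ?thesis .
  qed
  have "norm (g 1 - g 0) \<le> \<phi> 1 - \<phi> 0"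
    by (rule differentiable_bound_general[OF zero_less_one gc pc]) (use gd pd bnd in auto)
  then show ?thesis unfolding g_def \<phi>_def h_def by (simp add: algebra_simps)
qed



lemma half_sum:
  fixes f :: "nat \<Rightarrow> nat \<Rightarrow> real"
  assumes "\<And>i j. f i j = f j i" "\<And>i. f i i = 0"
  shows "(\<Sum>i<n. \<Sum>j<n. f i j) = 2 * (\<Sum>j<n. \<Sum>i<j. f i j)"
proof (induction n)
  case 0 then show ?case by simp
next
  case (Suc n)
  have "(\<Sum>i<Suc n. \<Sum>j<Suc n. f i j) = (\<Sum>i<n. \<Sum>j<n. f i j) + (\<Sum>i<n. f i n) + (\<Sum>j<n. f n j) + f n n"
    by (simp add: sum.distrib)
  also have "(\<Sum>j<n. f n j) = (\<Sum>i<n. f i n)" using assms(1) by simp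
  finally show ?case using Suc assms(2) by simp
qed

lemma var_id:
  fixes x :: "nat \<Rightarrow> 'a::real_inner" and w :: "nat \<Rightarrow> real"
  assumes W: "(\<Sum>i<n. w i) = 1"
  shows "(\<Sum>i<n. w i * (norm (x i - (\<Sum>k<n. w k *\<^sub>R x k)))^2)
       = (\<Sum>j<n. \<Sum>i<j. w i * w j * (norm (x i - x j))^2)"
proof -
  define m where "m = (\<Sum>k<n. w k *\<^sub>R x k)"
  define S where "S = (\<Sum>i<n. w i * inner (x i) (x i))"
  have mm: "(\<Sum>i<n. w i * inner (x i) m) = inner m m"
    unfolding m_def by (simp add: inner_sum_left)
  have mm2: "(\<Sum>i<n. \<Sum>j<n. w i * w j * inner (x i) (x j)) = inner m m"
  proof -
    have "inner m m = (\<Sum>k<n. \<Sum>j<n. w k * (w j * inner (x j) (x k)))"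
      unfolding m_def by (simp add: inner_sum_left inner_sum_right sum_distrib_left)
    also have "\<dots> = (\<Sum>j<n. \<Sum>k<n. w k * (w j * inner (x j) (x k)))" by (rule sum.swap)
    finally show ?thesis by (simp add: mult.left_commute mult.assoc)
  qed
  have e1: "w i * (norm (x i - m))^2 = w i * inner (x i) (x i) - 2 * (w i * inner (x i) m) + w i * inner m m" for i
    by (simp add: power2_norm_eq_inner inner_diff inner_commute algebra_simps)
  have "(\<Sum>i<n. w i * (norm (x i - m))^2)
      = (\<Sum>i<n. w i * inner (x i) (x i) - 2 * (w i * inner (x i) m) + w i * inner m m)"
    using e1 by simp
  also have "\<dots> = S - 2 * (\<Sum>i<n. w i * inner (x i) m) + (\<Sum>i<n. w i) * inner m m"
    unfolding S_def by (simp add: sum.distrib sum_subtractf sum_distrib_left sum_distrib_right)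
  also have "\<dots> = S - inner m m" using W mm by simp
  finally have L: "(\<Sum>i<n. w i * (norm (x i - m))^2) = S - inner m m" .
  have e2: "w i * w j * (norm (x i - x j))^2 = w i * w j * inner (x i) (x i) + w j * w i * inner (x j) (x j) - 2 * (w i * w j * inner (x i) (x j))" for i j
    by (simp add: power2_norm_eq_inner inner_diff inner_commute algebra_simps)
  have a: "(\<Sum>i<n. \<Sum>j<n. w i * w j * inner (x i) (x i)) = S"
  proof -
    have "(\<Sum>i<n. \<Sum>j<n. w i * w j * inner (x i) (x i)) = (\<Sum>i<n. (\<Sum>j<n. w j) * (w i * inner (x i) (x i)))"
      by (simp add: sum_distrib_left sum_distrib_right mult_ac)
    then show ?thesis using W S_def by simp
  qed
  have b: "(\<Sum>i<n. \<Sum>j<n. w j * w i * inner (x j) (x j)) = S"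
    using a sum.swap[of "\<lambda>i j. w i * w j * inner (x i) (x i)" "{..<n}" "{..<n}"] by simp
  have "(\<Sum>i<n. \<Sum>j<n. w i * w j * (norm (x i - x j))^2)
     = (\<Sum>i<n. \<Sum>j<n. w i * w j * inner (x i) (x i) + w j * w i * inner (x j) (x j) - 2 * (w i * w j * inner (x i) (x j)))"
    using e2 by simp
  also have "\<dots> = (\<Sum>i<n. \<Sum>j<n. w i * w j * inner (x i) (x i)) + (\<Sum>i<n. \<Sum>j<n. w j * w i * inner (x j) (x j))
       - 2 * (\<Sum>i<n. \<Sum>j<n. w i * w j * inner (x i) (x j))"
    by (simp add: sum.distrib sum_subtractf sum_distrib_left)
  also have "\<dots> = 2 * S - 2 * inner m m" using a b mm2 by simp
  finally have R: "(\<Sum>i<n. \<Sum>j<n. w i * w j * (norm (x i - x j))^2) = 2 * S - 2 * inner m m" .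
  have "(\<Sum>i<n. \<Sum>j<n. w i * w j * (norm (x i - x j))^2) = 2 * (\<Sum>j<n. \<Sum>i<j. w i * w j * (norm (x i - x j))^2)"
    by (rule half_sum) (auto simp: norm_minus_commute)
  then show ?thesis using L R unfolding m_def[symmetric] by simp
qed



context
  fixes F :: "'a::real_normed_vector \<Rightarrow> 'b::banach" and K :: real
  assumes K0: "K \<ge> 0"
    and P2: "\<And>a b l. 0 \<le> l \<Longrightarrow> l \<le> 1 \<Longrightarrow>
       norm (F (l *\<^sub>R a + (1-l) *\<^sub>R b) - (l *\<^sub>R F a + (1-l) *\<^sub>R F b)) \<le> K * (l*(1-l)*(norm(a-b))^2)"
begin

lemma q_cauchy:
  assumes s: "0 < s" "s \<le> t"
  shows "norm ((1/s) *\<^sub>R (F (x + s *\<^sub>R h) - F x) - (1/t) *\<^sub>R (F (x + t *\<^sub>R h) - F x))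
         \<le> K * (t - s) * (norm h)^2"
proof -
  have t: "t > 0" using s by simp
  define l where "l = s / t"
  have l01: "0 \<le> l" "l \<le> 1" using s t unfolding l_def by auto
  have pt: "l *\<^sub>R (x + t *\<^sub>R h) + (1 - l) *\<^sub>R x = x + s *\<^sub>R h"
    using t unfolding l_def by (simp add: algebra_simps)
  have "norm (F (x + s *\<^sub>R h) - (l *\<^sub>R F (x + t *\<^sub>R h) + (1-l) *\<^sub>R F x))
        \<le> K * (l*(1-l)*(norm((x + t *\<^sub>R h) - x))^2)"
    using P2[OF l01, of "x + t *\<^sub>R h" x] unfolding pt .
  also have "\<dots> = s * (K * (t - s) * (norm h)^2)"
    using t unfolding l_def by (simp add: power2_eq_square field_simps)
  also have "F (x + s *\<^sub>R h) - (l *\<^sub>R F (x + t *\<^sub>R h) + (1-l) *\<^sub>R F x)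
     = s *\<^sub>R ((1/s) *\<^sub>R (F (x + s *\<^sub>R h) - F x) - (1/t) *\<^sub>R (F (x + t *\<^sub>R h) - F x))"
    using s t unfolding l_def by (simp add: algebra_simps)
  finally show ?thesis using s by simp
qed

lemma q_cauchy2:
  assumes "0 < s" "0 < t"
  shows "norm ((1/s) *\<^sub>R (F (x + s *\<^sub>R h) - F x) - (1/t) *\<^sub>R (F (x + t *\<^sub>R h) - F x))
         \<le> K * max s t * (norm h)^2"
proof (cases "s \<le> t")
  case True
  have "K * (t - s) * (norm h)^2 \<le> K * max s t * (norm h)^2"
    using assms K0 by (intro mult_right_mono mult_left_mono) auto
  then show ?thesis using q_cauchy[OF assms(1) True, of x h] by linarith
next
  case False
  have "K * (s - t) * (norm h)^2 \<le> K * max s t * (norm h)^2"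
    using assms K0 by (intro mult_right_mono mult_left_mono) auto
  then show ?thesis using q_cauchy[OF assms(2), of s x h] False
    by (simp add: norm_minus_commute)
qed

lemma dir_deriv_exists:
  "\<exists>D. \<forall>t>0. norm ((1/t) *\<^sub>R (F (x + t *\<^sub>R h) - F x) - D) \<le> K * t * (norm h)^2"
proof -
  define q where "q t = (1/t) *\<^sub>R (F (x + t *\<^sub>R h) - F x)" for t
  define Q where "Q n = q (1 / real (Suc n))" for n
  have "Cauchy Q"
  proof (rule metric_CauchyI)
    fix e :: real assume e: "e > 0"
    obtain M0 :: nat where M0: "K * (norm h)^2 / e < real M0"
      using reals_Archimedean2 by blast
    define M where "M = M0"
    have M: "K * (norm h)^2 / e < real (Suc M)" using M0 unfolding M_def by simp
    have KM: "K * (norm h)^2 / real (Suc M) < e"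
      using M e by (simp add: field_simps)
    show "\<exists>M. \<forall>m\<ge>M. \<forall>n\<ge>M. dist (Q m) (Q n) < e"
    proof (intro exI allI impI)
      fix m n assume mn: "M \<le> m" "M \<le> n"
      have "dist (Q m) (Q n) \<le> K * max (1 / real (Suc m)) (1 / real (Suc n)) * (norm h)^2"
        unfolding dist_norm Q_def q_def by (rule q_cauchy2) auto
      also have "\<dots> \<le> K * (1 / real (Suc M)) * (norm h)^2"
        using mn K0 by (intro mult_right_mono mult_left_mono) (auto simp: frac_le)
      also have "\<dots> < e" using KM by simp
      finally show "dist (Q m) (Q n) < e" .
    qed
  qed
  then obtain D where D: "Q \<longlonglongrightarrow> D" using Cauchy_convergent_iff convergent_def by blast
  show ?thesis
  proof (intro exI allI impI)
    fix t :: real assume t: "t > 0"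
    obtain N0 :: nat where N0: "1 / t < real N0"
      using reals_Archimedean2 by blast
    define N where "N = N0"
    have N: "1 / t < real (Suc N)" using N0 unfolding N_def by simp
    have ev: "eventually (\<lambda>n. norm (q t - Q n) \<le> K * t * (norm h)^2) sequentially"
    proof (rule eventually_sequentiallyI[of N])
      fix n assume n: "N \<le> n"
      have sn: "1 / real (Suc n) \<le> t"
      proof -
        have "real (Suc N) \<le> real (Suc n)" using n by simp
        then have "1 / t < real (Suc n)" using N by linarith
        then have "1 < real (Suc n) * t" using t by (simp add: divide_less_eq)
        then show ?thesis by (simp add: divide_le_eq mult.commute)
      qed
      have "norm (q t - Q n) \<le> K * max t (1 / real (Suc n)) * (norm h)^2"
        unfolding Q_def q_def by (rule q_cauchy2) (use t in auto)
      also have "max t (1 / real (Suc n)) = t" using sn by simp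
      finally show "norm (q t - Q n) \<le> K * t * (norm h)^2" .
    qed
    have "(\<lambda>n. q t - Q n) \<longlonglongrightarrow> q t - D" by (intro tendsto_intros D)
    from Lim_norm_ubound[OF _ this ev] have "norm (q t - D) \<le> K * t * (norm h)^2" by simp
    then show "norm ((1/t) *\<^sub>R (F (x + t *\<^sub>R h) - F x) - D) \<le> K * t * (norm h)^2"
      by (simp add: q_def)
  qed
qed

end


lemma vanish:
  fixes v :: "'b::real_normed_vector"
  assumes "\<And>t. t > 0 \<Longrightarrow> t * norm v \<le> M * t^2"
  shows "v = 0"
proof (rule ccontr)
  assume "v \<noteq> 0"
  then have nv: "norm v > 0" by simp
  define t where "t = norm v / (2 * (\<bar>M\<bar> + 1))"
  have t: "t > 0" unfolding t_def using nv by (intro divide_pos_pos) auto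
  have "t * norm v \<le> M * t^2" by (rule assms[OF t])
  then have "norm v \<le> M * t" using t by (simp add: power2_eq_square)
  also have "\<dots> \<le> \<bar>M\<bar> * t" using t by (intro mult_right_mono) auto
  also have "\<dots> = norm v * (\<bar>M\<bar> / (2 * (\<bar>M\<bar> + 1)))" unfolding t_def by simp
  also have "\<dots> < norm v * 1"
    by (rule mult_strict_left_mono[OF _ nv]) (simp add: divide_less_eq)
  also have "\<dots> = norm v" by simp
  finally show False by simp
qed

lemma norm3: "norm (a + b + c) \<le> norm a + norm b + norm (c::'b::real_normed_vector)"
  using norm_triangle_ineq[of "a+b" c] norm_triangle_ineq[of a b] by linarith

lemma norm5: "norm (a + b + c + d + e) \<le> norm a + norm b + norm c + norm d + norm (e::'b::real_normed_vector)"
  using norm_triangle_ineq[of "a+b+c+d" e] norm_triangle_ineq[of "a+b+c" d] norm3[of a b c] by linarith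

context
  fixes F :: "'a::real_normed_vector \<Rightarrow> 'b::banach" and K :: real and T :: "'a \<Rightarrow> 'b" and x :: 'a
  assumes K0: "K \<ge> 0"
    and P2: "\<And>a b l. 0 \<le> l \<Longrightarrow> l \<le> 1 \<Longrightarrow>
       norm (F (l *\<^sub>R a + (1-l) *\<^sub>R b) - (l *\<^sub>R F a + (1-l) *\<^sub>R F b)) \<le> K * (l*(1-l)*(norm(a-b))^2)"
    and T1: "\<And>h t. 0 \<le> t \<Longrightarrow> norm (F (x + t *\<^sub>R h) - F x - t *\<^sub>R T h) \<le> K * t^2 * (norm h)^2"
begin

lemma P2half: "norm (F ((1/2) *\<^sub>R a + (1/2) *\<^sub>R b) - ((1/2) *\<^sub>R F a + (1/2) *\<^sub>R F b)) \<le> K / 4 * (norm(a-b))^2"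
  using P2[of "1/2" a b] by simp

lemma T_neg: "T (- h) = - T h"
proof -
  have "T h + T (-h) = 0"
  proof (rule vanish[where M = "4 * K * (norm h)^2"])
    fix t :: real assume t: "t > 0"
    define e1 where "e1 = F (x + t *\<^sub>R h) - F x - t *\<^sub>R T h"
    define e2 where "e2 = F (x + t *\<^sub>R (-h)) - F x - t *\<^sub>R T (-h)"
    define e3 where "e3 = F ((1/2) *\<^sub>R (x + t *\<^sub>R h) + (1/2) *\<^sub>R (x + t *\<^sub>R (-h)))
        - ((1/2) *\<^sub>R F (x + t *\<^sub>R h) + (1/2) *\<^sub>R F (x + t *\<^sub>R (-h)))"
    have n1: "norm e1 \<le> K * t^2 * (norm h)^2" unfolding e1_def using T1 t by simp
    have n2: "norm e2 \<le> K * t^2 * (norm h)^2" unfolding e2_def using T1[of t "-h"] t by simp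
    have n3: "norm e3 \<le> K * t^2 * (norm h)^2"
    proof -
      have "norm e3 \<le> K / 4 * (norm ((x + t *\<^sub>R h) - (x + t *\<^sub>R (-h))))^2" unfolding e3_def by (rule P2half)
      also have "(x + t *\<^sub>R h) - (x + t *\<^sub>R (-h)) = (2 * t) *\<^sub>R h" by (simp add: scaleR_2 flip: scaleR_scaleR)
      also have "K / 4 * (norm ((2 * t) *\<^sub>R h))^2 = K * t^2 * (norm h)^2"
        using t by (simp add: power2_eq_square)
      finally show ?thesis .
    qed
    have mid: "(1/2) *\<^sub>R (x + t *\<^sub>R h) + (1/2) *\<^sub>R (x + t *\<^sub>R (-h)) = x"
      by (simp add: algebra_simps scaleR_add_left[symmetric])
    have id: "t *\<^sub>R (T h + T (-h)) = - e1 - e2 - 2 *\<^sub>R e3"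
      unfolding e1_def e2_def e3_def mid by (simp add: algebra_simps scaleR_2)
    have "t * norm (T h + T (-h)) = norm (t *\<^sub>R (T h + T (-h)))"
      using t by simp
    also have "\<dots> = norm (- e1 - e2 - 2 *\<^sub>R e3)" unfolding id ..
    also have "\<dots> \<le> norm e1 + norm e2 + 2 * norm e3"
      using norm3[of "- e1" "- e2" "- (2 *\<^sub>R e3)"] by simp
    also have "\<dots> \<le> 4 * (K * t^2 * (norm h)^2)" using n1 n2 n3 by linarith
    also have "\<dots> = 4 * K * (norm h)^2 * t^2" by (simp add: mult_ac)
    finally show "t * norm (T h + T (-h)) \<le> 4 * K * (norm h)^2 * t^2" .
  qed
  then show ?thesis by (simp add: eq_neg_iff_add_eq_0 add.commute)
qed

lemma T_pos_scale:
  assumes c: "c > 0"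
  shows "T (c *\<^sub>R h) = c *\<^sub>R T h"
proof -
  have "T (c *\<^sub>R h) - c *\<^sub>R T h = 0"
  proof (rule vanish[where M = "2 * K * c^2 * (norm h)^2"])
    fix t :: real assume t: "t > 0"
    define e1 where "e1 = F (x + t *\<^sub>R (c *\<^sub>R h)) - F x - t *\<^sub>R T (c *\<^sub>R h)"
    define e2 where "e2 = F (x + (t * c) *\<^sub>R h) - F x - (t * c) *\<^sub>R T h"
    have n1: "norm e1 \<le> K * t^2 * c^2 * (norm h)^2" unfolding e1_def using T1[of t "c *\<^sub>R h"] t c
      by (simp add: power2_eq_square mult_ac)
    have n2: "norm e2 \<le> K * t^2 * c^2 * (norm h)^2" unfolding e2_def using T1[of "t * c" h] t c
      by (simp add: power2_eq_square mult_ac)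
    have id: "t *\<^sub>R (T (c *\<^sub>R h) - c *\<^sub>R T h) = e2 - e1"
      unfolding e1_def e2_def by (simp add: algebra_simps)
    have "t * norm (T (c *\<^sub>R h) - c *\<^sub>R T h) = norm (t *\<^sub>R (T (c *\<^sub>R h) - c *\<^sub>R T h))"
      using t by simp
    also have "\<dots> = norm (e2 - e1)" unfolding id ..
    also have "\<dots> \<le> norm e1 + norm e2" using norm_triangle_ineq4[of e2 e1] by linarith
    also have "\<dots> \<le> 2 * (K * t^2 * c^2 * (norm h)^2)" using n1 n2 by simp
    also have "\<dots> = 2 * K * c^2 * (norm h)^2 * t^2" by (simp add: mult_ac)
    finally show "t * norm (T (c *\<^sub>R h) - c *\<^sub>R T h) \<le> 2 * K * c^2 * (norm h)^2 * t^2" .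
  qed
  then show ?thesis by simp
qed

lemma T_zero: "T 0 = 0"
  using T1[of 1 0] by simp

lemma T_scale: "T (c *\<^sub>R h) = c *\<^sub>R T h"
proof -
  consider "c > 0" | "c = 0" | "c < 0" by linarith
  then show ?thesis
  proof cases
    case 1 then show ?thesis by (rule T_pos_scale)
  next
    case 2 then show ?thesis by (simp add: T_zero)
  next
    case 3
    have "T (c *\<^sub>R h) = T (- ((-c) *\<^sub>R h))" by simp
    also have "\<dots> = - T ((-c) *\<^sub>R h)" by (rule T_neg)
    also have "\<dots> = c *\<^sub>R T h" using T_pos_scale[of "-c" h] 3 by simp
    finally show ?thesis .
  qed
qed

lemma T_add: "T (h + k) = T h + T k"
proof -
  have "T (h + k) - T h - T k = 0"
  proof (rule vanish[where M = "K * ((norm (h+k))^2 + (norm h)^2 + (norm k)^2 + (norm (h - k))^2 / 2 + (norm (h + k))^2 / 2)"])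
    fix t :: real assume t: "t > 0"
    define e1 where "e1 = F (x + t *\<^sub>R (h + k)) - F x - t *\<^sub>R T (h + k)"
    define e2 where "e2 = F (x + t *\<^sub>R h) - F x - t *\<^sub>R T h"
    define e3 where "e3 = F (x + t *\<^sub>R k) - F x - t *\<^sub>R T k"
    define f1 where "f1 = F ((1/2) *\<^sub>R (x + t *\<^sub>R (h + k)) + (1/2) *\<^sub>R x)
        - ((1/2) *\<^sub>R F (x + t *\<^sub>R (h + k)) + (1/2) *\<^sub>R F x)"
    define f2 where "f2 = F ((1/2) *\<^sub>R (x + t *\<^sub>R h) + (1/2) *\<^sub>R (x + t *\<^sub>R k))
        - ((1/2) *\<^sub>R F (x + t *\<^sub>R h) + (1/2) *\<^sub>R F (x + t *\<^sub>R k))"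
    have n1: "norm e1 \<le> K * t^2 * (norm (h + k))^2" unfolding e1_def using T1 t by simp
    have n2: "norm e2 \<le> K * t^2 * (norm h)^2" unfolding e2_def using T1 t by simp
    have n3: "norm e3 \<le> K * t^2 * (norm k)^2" unfolding e3_def using T1 t by simp
    have n4: "norm f1 \<le> K / 4 * t^2 * (norm (h + k))^2"
    proof -
      have "norm f1 \<le> K / 4 * (norm ((x + t *\<^sub>R (h + k)) - x))^2" unfolding f1_def by (rule P2half)
      then show ?thesis using t by (simp add: power2_eq_square mult_ac)
    qed
    have n5: "norm f2 \<le> K / 4 * t^2 * (norm (h - k))^2"
    proof -
      have "norm f2 \<le> K / 4 * (norm ((x + t *\<^sub>R h) - (x + t *\<^sub>R k)))^2" unfolding f2_def by (rule P2half)
      also have "(x + t *\<^sub>R h) - (x + t *\<^sub>R k) = t *\<^sub>R (h - k)" by (simp add: algebra_simps)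
      finally show ?thesis using t by (simp add: power2_eq_square mult_ac)
    qed
    have mid: "(1/2) *\<^sub>R (x + t *\<^sub>R (h + k)) + (1/2) *\<^sub>R x = (1/2) *\<^sub>R (x + t *\<^sub>R h) + (1/2) *\<^sub>R (x + t *\<^sub>R k)"
      by (simp add: algebra_simps)
    have id: "t *\<^sub>R (T (h + k) - T h - T k) = - e1 + e2 + e3 + 2 *\<^sub>R f2 - 2 *\<^sub>R f1"
      unfolding e1_def e2_def e3_def f1_def f2_def mid by (simp add: algebra_simps)
    have "t * norm (T (h + k) - T h - T k) = norm (t *\<^sub>R (T (h + k) - T h - T k))"
      using t by simp
    also have "\<dots> = norm (- e1 + e2 + e3 + 2 *\<^sub>R f2 - 2 *\<^sub>R f1)" unfolding id ..
    also have "\<dots> \<le> norm e1 + norm e2 + norm e3 + 2 * norm f2 + 2 * norm f1"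
      using norm5[of "- e1" e2 e3 "2 *\<^sub>R f2" "- (2 *\<^sub>R f1)"] by simp
    also have "\<dots> \<le> K * ((norm (h+k))^2 + (norm h)^2 + (norm k)^2 + (norm (h - k))^2 / 2 + (norm (h + k))^2 / 2) * t^2"
      using n1 n2 n3 n4 n5 by (simp add: algebra_simps)
    finally show "t * norm (T (h + k) - T h - T k) \<le> K * ((norm (h+k))^2 + (norm h)^2 + (norm k)^2 + (norm (h - k))^2 / 2 + (norm (h + k))^2 / 2) * t^2" .
  qed
  then show ?thesis by (simp add: algebra_simps)
qed

end


lemma T_bounded:
  fixes F :: "'a::real_normed_vector \<Rightarrow> 'b::real_normed_vector" and T :: "'a \<Rightarrow> 'b"
  assumes K0: "K \<ge> 0" and cont: "isCont F x"
    and T1: "\<And>h t. 0 \<le> t \<Longrightarrow> norm (F (x + t *\<^sub>R h) - F x - t *\<^sub>R T h) \<le> K * t^2 * (norm h)^2"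
  shows "\<exists>C. \<forall>h. norm (T h) \<le> norm h * C"
proof -
  obtain d where d: "d > 0" "\<And>z. dist z x < d \<Longrightarrow> dist (F z) (F x) < 1"
    using cont unfolding continuous_at_eps_delta by (meson zero_less_one)
  define C where "C = (2 / d) * (1 + K * d^2 / 4)"
  have "norm (T h) \<le> norm h * C" for h
  proof (cases "h = 0")
    case True
    then have "T h = 0" using T1[of 1 0] by simp
    then show ?thesis using True by simp
  next
    case False
    then have nh: "norm h > 0" by simp
    define t where "t = d / (2 * norm h)"
    have t: "t > 0" unfolding t_def using d nh by simp
    have "norm (t *\<^sub>R h) = d / 2" unfolding t_def using nh d by simp
    then have "dist (x + t *\<^sub>R h) x < d" using d by (simp add: dist_norm)
    then have a: "norm (F (x + t *\<^sub>R h) - F x) < 1" using d by (simp add: dist_norm)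
    have b: "norm (F (x + t *\<^sub>R h) - F x - t *\<^sub>R T h) \<le> K * d^2 / 4"
      using T1[of t h] t nh unfolding t_def by (simp add: power2_eq_square field_simps)
    have "t * norm (T h) = norm (t *\<^sub>R T h)" using t by simp
    also have "\<dots> = norm ((F (x + t *\<^sub>R h) - F x) - (F (x + t *\<^sub>R h) - F x - t *\<^sub>R T h))" by simp
    also have "\<dots> \<le> norm (F (x + t *\<^sub>R h) - F x) + norm (F (x + t *\<^sub>R h) - F x - t *\<^sub>R T h)"
      by (rule norm_triangle_ineq4)
    also have "\<dots> \<le> 1 + K * d^2 / 4" using a b by simp
    finally have "t * norm (T h) \<le> 1 + K * d^2 / 4" .
    then have "norm (T h) \<le> (1 + K * d^2 / 4) / t" using t by (simp add: field_simps)
    also have "\<dots> = norm h * C" unfolding t_def C_def using nh d by (simp add: field_simps)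
    finally show ?thesis .
  qed
  then show ?thesis by blast
qed

lemma T_deriv:
  fixes F :: "'a::real_normed_vector \<Rightarrow> 'b::real_normed_vector" and T :: "'a \<Rightarrow> 'b"
  assumes K0: "K \<ge> 0" and bl: "bounded_linear T"
    and T1: "\<And>h. norm (F (x + h) - F x - T h) \<le> K * (norm h)^2"
  shows "(F has_derivative T) (at x)"
  unfolding has_derivative_at_alt
proof (intro conjI bl allI impI)
  fix e :: real assume e: "e > 0"
  show "\<exists>d>0. \<forall>y. norm (y - x) < d \<longrightarrow> norm (F y - F x - T (y - x)) \<le> e * norm (y - x)"
  proof (intro exI conjI allI impI)
    show "e / (K + 1) > 0" using e K0 by simp
    fix y assume y: "norm (y - x) < e / (K + 1)"
    have "norm (F y - F x - T (y - x)) \<le> K * (norm (y - x))^2" using T1[of "y - x"] by simp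
    also have "\<dots> = (K * norm (y - x)) * norm (y - x)" by (simp add: power2_eq_square)
    also have "\<dots> \<le> e * norm (y - x)"
    proof (rule mult_right_mono)
      have "K * norm (y - x) \<le> (K + 1) * norm (y - x)" by (simp add: algebra_simps)
      also have "\<dots> \<le> (K + 1) * (e / (K + 1))" using y K0 by (intro mult_left_mono) auto
      also have "\<dots> = e" using K0 by simp
      finally show "K * norm (y - x) \<le> e" .
    qed simp
    finally show "norm (F y - F x - T (y - x)) \<le> e * norm (y - x)" .
  qed
qed


lemma arith_opt:
  fixes b D U K :: real
  assumes h: "\<And>s. s > 0 \<Longrightarrow> 2 * s * b \<le> K * D^2 + 4 * K * s^2 * U^2"
    and "b \<ge> 0" "D \<ge> 0" "U \<ge> 0" "K \<ge> 0"
  shows "b \<le> 2 * K * D * U"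
proof (cases "D > 0 \<and> U > 0")
  case True
  define s where "s = D / (2 * U)"
  have s: "s > 0" using True unfolding s_def by simp
  have "2 * s * b \<le> K * D^2 + 4 * K * s^2 * U^2" by (rule h[OF s])
  also have "4 * K * s^2 * U^2 = K * D^2" unfolding s_def using True by (simp add: power2_eq_square field_simps)
  finally have "D / U * b \<le> 2 * K * D^2" unfolding s_def using True by (simp add: field_simps)
  then have "D * b \<le> 2 * K * D^2 * U" using True by (simp add: field_simps)
  then show ?thesis using True by (simp add: power2_eq_square mult_ac)
next
  case False
  then have z: "D = 0 \<or> U = 0" using assms by auto
  have "b \<le> 0"
  proof (rule ccontr)
    assume "\<not> b \<le> 0"
    then have bp: "b > 0" by simp
    show False
    proof (cases "D = 0")
      case True
      define s where "s = b / (4 * K * U^2 + 1)"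
      have s: "s > 0" using bp assms unfolding s_def by (simp add: add_nonneg_pos)
      have "2 * s * b \<le> 4 * K * s^2 * U^2" using h[OF s] True by simp
      then have "2 * b \<le> 4 * K * s * U^2" using s by (simp add: power2_eq_square field_simps)
      also have "\<dots> = b * (4 * K * U^2) / (4 * K * U^2 + 1)" unfolding s_def by simp
      also have "\<dots> \<le> b"
      proof -
        have X: "0 \<le> 4 * K * U^2" using assms by simp
        have "b * (4 * K * U^2) \<le> b * (4 * K * U^2 + 1)" using bp by simp
        then show ?thesis using X by (subst pos_divide_le_eq) auto
      qed
      finally show False using bp by simp
    next
      case False
      then have U: "U = 0" using z by simp
      define s where "s = (K * D^2 + 1) / b"
      have s: "s > 0" using bp assms unfolding s_def by (simp add: add_nonneg_pos)
      have "2 * s * b \<le> K * D^2" using h[OF s] U by simp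
      moreover have "s * b = K * D^2 + 1" unfolding s_def using bp by simp
      moreover have "K * D^2 \<ge> 0" using assms by simp
      moreover have "2 * s * b = 2 * (s * b)" by simp
      ultimately show False by linarith
    qed
  qed
  then show ?thesis using assms by simp
qed

lemma parallelogram:
  fixes a v :: "'a::real_inner"
  shows "(norm (a + v))^2 + (norm (a - v))^2 = 2 * (norm a)^2 + 2 * (norm v)^2"
  by (simp add: power2_norm_eq_inner inner_add inner_diff inner_commute)


lemma lip_bound:
  fixes F :: "'a::real_inner \<Rightarrow> 'b::real_normed_vector" and T :: "'a \<Rightarrow> 'a \<Rightarrow> 'b"
  assumes K0: "K \<ge> 0" and bl: "\<And>x. bounded_linear (T x)"
    and R: "\<And>p q. norm (F p - F q - T q (p - q)) \<le> K * (norm (p - q))^2"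
  shows "norm (T x u - T y u) \<le> 2 * K * norm (x - y) * norm u"
proof -
  interpret Tx: bounded_linear "T x" by (rule bl)
  interpret Ty: bounded_linear "T y" by (rule bl)
  have half2: "(1/2) *\<^sub>R z + (1/2) *\<^sub>R z = z" for z :: 'a
    by (simp flip: scaleR_add_left)
  define a where "a = (1/2) *\<^sub>R (x - y)"
  have key: "2 * s * norm (T x u - T y u) \<le> K * (norm (x - y))^2 + 4 * K * s^2 * (norm u)^2" if s: "s > 0" for s
  proof -
    define v where "v = s *\<^sub>R u"
    define m where "m = (1/2) *\<^sub>R (x + y)"
    define w where "w = m + v"
    define w' where "w' = m - v"
    define r where "r p q = F p - F q - T q (p - q)" for p q
    have lx: "T x (w - x) - T x (w' - x) = T x (w - w')" by (simp add: Tx.diff[symmetric] Ty.diff[symmetric])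
    have ly: "T y (w - y) - T y (w' - y) = T y (w - w')" by (simp add: Tx.diff[symmetric] Ty.diff[symmetric])
    have id: "T x (w - w') - T y (w - w') = r w y - r w x + r w' x - r w' y"
      unfolding r_def using lx ly by (simp add: algebra_simps)
    have ww: "w - w' = (2 * s) *\<^sub>R u" unfolding w_def w'_def v_def by (simp add: scaleR_2 flip: scaleR_scaleR)
    have "2 * s * norm (T x u - T y u) = norm (T x (w - w') - T y (w - w'))"
      unfolding ww using s by (simp add: Tx.scale Ty.scale flip: scaleR_diff_right)
    also have "\<dots> \<le> norm (r w y) + norm (r w x) + norm (r w' x) + norm (r w' y)"
      unfolding id using norm_triangle_ineq4[of "r w y - r w x + r w' x" "r w' y"]
        norm_triangle_ineq[of "r w y - r w x" "r w' x"] norm_triangle_ineq4[of "r w y" "r w x"] by linarith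
    also have "\<dots> \<le> K * (norm (w - y))^2 + K * (norm (w - x))^2 + K * (norm (w' - x))^2 + K * (norm (w' - y))^2"
      unfolding r_def by (intro add_mono R)
    also have "\<dots> = K * ((norm (w - y))^2 + (norm (w - x))^2 + (norm (w' - x))^2 + (norm (w' - y))^2)"
      by (simp add: distrib_left)
    also have "(norm (w - y))^2 + (norm (w - x))^2 + (norm (w' - x))^2 + (norm (w' - y))^2
       = 2 * ((norm (a + v))^2 + (norm (a - v))^2)"
    proof -
      have 1: "w - y = a + v" unfolding w_def m_def a_def by (simp add: algebra_simps half2)
      have 2: "w - x = - (a - v)" unfolding w_def m_def a_def by (simp add: algebra_simps half2)
      have 3: "w' - x = - (a + v)" unfolding w'_def m_def a_def by (simp add: algebra_simps half2)
      have 4: "w' - y = a - v" unfolding w'_def m_def a_def by (simp add: algebra_simps half2)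
      show ?thesis unfolding 1 2 3 4 norm_minus_cancel by simp
    qed
    also have "\<dots> = (norm (x - y))^2 + 4 * s^2 * (norm u)^2"
      unfolding parallelogram a_def v_def by (simp add: power2_eq_square)
    finally show ?thesis by (simp add: algebra_simps)
  qed
  show ?thesis by (rule arith_opt[OF key]) (use K0 in auto)
qed


theorem theorem1p2:
  fixes F :: "'a::{real_inner, complete_space} \<Rightarrow> 'b::banach"
    and L :: real
  assumes reflY: "reflexive_space TYPE('b)"
    and contF: "continuous_on UNIV F"
    and Lpos: "L > 0"
  shows "(\<exists>F' :: 'a \<Rightarrow> ('a \<Rightarrow>\<^sub>L 'b).
            (\<forall>x. (F has_derivative blinfun_apply (F' x)) (at x)) \<and>
            (\<forall>x y. norm (F' x - F' y) \<le> L * norm (x - y)))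
     \<longleftrightarrow>
         (\<forall>(n::nat) (x::nat \<Rightarrow> 'a) (w::nat \<Rightarrow> real).
            n \<ge> 1 \<longrightarrow> (\<forall>i<n. w i \<ge> 0) \<longrightarrow> (\<Sum>i<n. w i) = 1 \<longrightarrow>
            norm (F (\<Sum>i<n. w i *\<^sub>R x i) - (\<Sum>i<n. w i *\<^sub>R F (x i)))
              \<le> L / 2 * (\<Sum>j<n. \<Sum>i<j. w i * w j * (norm (x i - x j))\<^sup>2))"
proof
  assume "\<exists>F' :: 'a \<Rightarrow> ('a \<Rightarrow>\<^sub>L 'b).
            (\<forall>x. (F has_derivative blinfun_apply (F' x)) (at x)) \<and>
            (\<forall>x y. norm (F' x - F' y) \<le> L * norm (x - y))"
  then obtain F' :: "'a \<Rightarrow> ('a \<Rightarrow>\<^sub>L 'b)" where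
    der: "\<forall>x. (F has_derivative blinfun_apply (F' x)) (at x)" and
    lip: "\<forall>x y. norm (F' x - F' y) \<le> L * norm (x - y)" by blast
  show "\<forall>(n::nat) (x::nat \<Rightarrow> 'a) (w::nat \<Rightarrow> real).
            n \<ge> 1 \<longrightarrow> (\<forall>i<n. w i \<ge> 0) \<longrightarrow> (\<Sum>i<n. w i) = 1 \<longrightarrow>
            norm (F (\<Sum>i<n. w i *\<^sub>R x i) - (\<Sum>i<n. w i *\<^sub>R F (x i)))
              \<le> L / 2 * (\<Sum>j<n. \<Sum>i<j. w i * w j * (norm (x i - x j))\<^sup>2)"
  proof (intro allI impI)
    fix n :: nat and x :: "nat \<Rightarrow> 'a" and w :: "nat \<Rightarrow> real"
    assume w0: "\<forall>i<n. w i \<ge> 0" and W: "(\<Sum>i<n. w i) = 1"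
    define m where "m = (\<Sum>i<n. w i *\<^sub>R x i)"
    define R where "R i = F (x i) - F m - F' m (x i - m)" for i
    have Rb: "norm (R i) \<le> L/2 * (norm (x i - m))^2" for i
      unfolding R_def by (rule taylor_bound[OF der lip])
    have s0: "(\<Sum>i<n. w i *\<^sub>R (x i - m)) = 0"
      using W unfolding m_def by (simp add: scaleR_diff_right sum_subtractf flip: scaleR_sum_left)
    have "(\<Sum>i<n. w i *\<^sub>R R i) = (\<Sum>i<n. w i *\<^sub>R F (x i)) - (\<Sum>i<n. w i) *\<^sub>R F m
        - (\<Sum>i<n. w i *\<^sub>R F' m (x i - m))"
      unfolding R_def by (simp add: scaleR_diff_right sum_subtractf scaleR_sum_left)
    also have "(\<Sum>i<n. w i *\<^sub>R F' m (x i - m)) = F' m (\<Sum>i<n. w i *\<^sub>R (x i - m))"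
      by (simp add: blinfun.sum_right blinfun.scaleR_right)
    also have "\<dots> = 0" unfolding s0 by simp
    finally have sR: "(\<Sum>i<n. w i *\<^sub>R R i) = (\<Sum>i<n. w i *\<^sub>R F (x i)) - F m" using W by simp
    have "norm (F m - (\<Sum>i<n. w i *\<^sub>R F (x i))) = norm (\<Sum>i<n. w i *\<^sub>R R i)"
      unfolding sR by (simp add: norm_minus_commute)
    also have "\<dots> \<le> (\<Sum>i<n. norm (w i *\<^sub>R R i))" by (rule norm_sum)
    also have "\<dots> \<le> (\<Sum>i<n. w i * (L/2 * (norm (x i - m))^2))"
    proof (rule sum_mono)
      fix i assume "i \<in> {..<n}"
      then have "w i \<ge> 0" using w0 by simp
      then have "w i * norm (R i) \<le> w i * (L/2 * (norm (x i - m))^2)"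
        by (rule mult_left_mono[OF Rb])
      then show "norm (w i *\<^sub>R R i) \<le> w i * (L/2 * (norm (x i - m))^2)"
        using \<open>w i \<ge> 0\<close> by simp
    qed
    also have "\<dots> = L/2 * (\<Sum>i<n. w i * (norm (x i - m))^2)"
      by (simp add: sum_distrib_left mult_ac)
    also have "(\<Sum>i<n. w i * (norm (x i - m))^2) = (\<Sum>j<n. \<Sum>i<j. w i * w j * (norm (x i - x j))^2)"
      unfolding m_def by (rule var_id[OF W])
    finally show "norm (F (\<Sum>i<n. w i *\<^sub>R x i) - (\<Sum>i<n. w i *\<^sub>R F (x i)))
              \<le> L / 2 * (\<Sum>j<n. \<Sum>i<j. w i * w j * (norm (x i - x j))\<^sup>2)"
      unfolding m_def .
  qed
next
  assume H: "\<forall>(n::nat) (x::nat \<Rightarrow> 'a) (w::nat \<Rightarrow> real).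
            n \<ge> 1 \<longrightarrow> (\<forall>i<n. w i \<ge> 0) \<longrightarrow> (\<Sum>i<n. w i) = 1 \<longrightarrow>
            norm (F (\<Sum>i<n. w i *\<^sub>R x i) - (\<Sum>i<n. w i *\<^sub>R F (x i)))
              \<le> L / 2 * (\<Sum>j<n. \<Sum>i<j. w i * w j * (norm (x i - x j))\<^sup>2)"
  define K where "K = L / 2"
  have K0: "K \<ge> 0" using Lpos unfolding K_def by simp
  have P2: "norm (F (l *\<^sub>R a + (1-l) *\<^sub>R b) - (l *\<^sub>R F a + (1-l) *\<^sub>R F b)) \<le> K * (l*(1-l)*(norm(a-b))^2)"
    if l: "0 \<le> l" "l \<le> 1" for a b :: 'a and l :: real
  proof -
    define xx where "xx i = (if i = 0 then a else b)" for i :: nat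
    define ww where "ww i = (if i = 0 then l else 1 - l)" for i :: nat
    have "norm (F (\<Sum>i<2. ww i *\<^sub>R xx i) - (\<Sum>i<2. ww i *\<^sub>R F (xx i)))
              \<le> L / 2 * (\<Sum>j<2. \<Sum>i<j. ww i * ww j * (norm (xx i - xx j))\<^sup>2)"
      using H[rule_format, of 2 ww xx] l unfolding ww_def by (simp add: numeral_2_eq_2)
    then show ?thesis unfolding xx_def ww_def K_def by (simp add: numeral_2_eq_2 mult_ac)
  qed
  have "\<forall>x h. \<exists>D. \<forall>t>0. norm ((1/t) *\<^sub>R (F (x + t *\<^sub>R h) - F x) - D) \<le> K * t * (norm h)^2"
    using dir_deriv_exists[OF K0 P2] by blast
  then obtain T :: "'a \<Rightarrow> 'a \<Rightarrow> 'b" where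
    TD: "\<And>x h t. t > 0 \<Longrightarrow> norm ((1/t) *\<^sub>R (F (x + t *\<^sub>R h) - F x) - T x h) \<le> K * t * (norm h)^2"
    by metis
  have T1: "norm (F (x + t *\<^sub>R h) - F x - t *\<^sub>R T x h) \<le> K * t^2 * (norm h)^2" if t: "0 \<le> t" for x h t
  proof (cases "t = 0")
    case True then show ?thesis by simp
  next
    case False
    then have tp: "t > 0" using t by simp
    have "F (x + t *\<^sub>R h) - F x - t *\<^sub>R T x h = t *\<^sub>R ((1/t) *\<^sub>R (F (x + t *\<^sub>R h) - F x) - T x h)"
      using tp by (simp add: algebra_simps)
    then have "norm (F (x + t *\<^sub>R h) - F x - t *\<^sub>R T x h) = t * norm ((1/t) *\<^sub>R (F (x + t *\<^sub>R h) - F x) - T x h)"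
      using tp by simp
    also have "\<dots> \<le> t * (K * t * (norm h)^2)" using TD[OF tp, of x h] tp by (simp add: mult_left_mono)
    finally show ?thesis by (simp add: power2_eq_square mult_ac)
  qed
  have bl: "bounded_linear (T x)" for x
  proof -
    have cx: "isCont F x" using contF by (simp add: continuous_on_eq_continuous_at)
    obtain C where C: "\<And>h. norm (T x h) \<le> norm h * C"
      using T_bounded[OF K0 cx, of "T x"] T1 by blast
    show ?thesis
    proof (rule bounded_linear_intro[where K = C])
      show "T x (h + k) = T x h + T x k" for h k by (rule T_add[OF K0 P2 T1])
      show "T x (r *\<^sub>R h) = r *\<^sub>R T x h" for r h by (rule T_scale[OF K0 P2 T1])
      show "norm (T x h) \<le> norm h * C" for h by (rule C)
    qed
  qed
  have T1': "norm (F (x + h) - F x - T x h) \<le> K * (norm h)^2" for x h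
    using T1[of 1 x h] by simp
  have R: "norm (F p - F q - T q (p - q)) \<le> K * (norm (p - q))^2" for p q
    using T1'[of q "p - q"] by simp
  define F' where "F' x = Blinfun (T x)" for x
  have F'a: "blinfun_apply (F' x) = T x" for x
    unfolding F'_def using bl by (simp add: bounded_linear_Blinfun_apply)
  show "\<exists>F' :: 'a \<Rightarrow> ('a \<Rightarrow>\<^sub>L 'b).
            (\<forall>x. (F has_derivative blinfun_apply (F' x)) (at x)) \<and>
            (\<forall>x y. norm (F' x - F' y) \<le> L * norm (x - y))"
  proof (intro exI conjI allI)
    fix x
    show "(F has_derivative blinfun_apply (F' x)) (at x)"
      unfolding F'a by (rule T_deriv[OF K0 bl T1'])
  next
    fix x y
    show "norm (F' x - F' y) \<le> L * norm (x - y)"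
    proof (rule norm_blinfun_bound)
      show "0 \<le> L * norm (x - y)" using Lpos by simp
      fix u
      have "norm (blinfun_apply (F' x - F' y) u) = norm (T x u - T y u)"
        by (simp add: blinfun.diff_left F'a)
      also have "\<dots> \<le> 2 * K * norm (x - y) * norm u" by (rule lip_bound[OF K0 bl R])
      also have "\<dots> = L * norm (x - y) * norm u" unfolding K_def by simp
      finally show "norm (blinfun_apply (F' x - F' y) u) \<le> L * norm (x - y) * norm u" .
    qed
  qed
qed

end
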